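(* Let $A$ be a finite skew brace such that $\Lambda(A)$ has exactly one vertex. Then $(A/\ker\lambda,\circ)$ and $(\operatorname{Fix}(A),+)$ are isomorphic abelian groups. Moreover $x+f-x=-f$ for all $f\in\operatorname{Fix}(A)$ and all $x\in A\setminus\operatorname{Fix}(A)$.
   Context: A skew brace is a triple $(A,+,\circ)$ where $(A,+)$ and $(A,\circ)$ are groups with $a\circ(b+c)=a\circ b-a+a\circ c$. $\lambda\colon(A,\circ)\to\operatorname{Aut}(A,+)$, $\lambda_a(b)=-a+a\circ b$, is a group homomorphism; $\ker\lambda$ is its kernel. $\operatorname{Fix}(A)=\{a\in A:\lambda_x(a)=a\ \forall x\in A\}$. $\Lambda(A)$ is the graph whose vertices are the $\lambda$-orbits of size $>1$, two distinct vertices $L_1,L_2$ adjacent iff $\gcd(|L_1|,|L_2|)\ne1$. *)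

theory Defs
  imports "HOL-Algebra.Algebra"
begin

(* A skew brace is given by two group structures on the same carrier:
  G = (A,+) (written multiplicatively in HOL-Algebra, so a + b is a \<otimes>_G b and -a is inv_G a)
  and C = (A,\<circ>) (a \<circ> b is a \<otimes>_C b). *)

definition skew_brace :: "'a monoid \<Rightarrow> 'a monoid \<Rightarrow> bool" where
  "skew_brace G C \<longleftrightarrow> group G \<and> group C \<and> carrier C = carrier G \<and>
     (\<forall>a\<in>carrier G. \<forall>b\<in>carrier G. \<forall>c\<in>carrier G.
        a \<otimes>\<^bsub>C\<^esub> (b \<otimes>\<^bsub>G\<^esub> c)
          = ((a \<otimes>\<^bsub>C\<^esub> b) \<otimes>\<^bsub>G\<^esub> inv\<^bsub>G\<^esub> a) \<otimes>\<^bsub>G\<^esub> (a \<otimes>\<^bsub>C\<^esub> c))"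

definition brace_lambda :: "'a monoid \<Rightarrow> 'a monoid \<Rightarrow> 'a \<Rightarrow> 'a \<Rightarrow> 'a" where
  "brace_lambda G C a b = inv\<^bsub>G\<^esub> a \<otimes>\<^bsub>G\<^esub> (a \<otimes>\<^bsub>C\<^esub> b)"

definition brace_ker :: "'a monoid \<Rightarrow> 'a monoid \<Rightarrow> 'a set" where
  "brace_ker G C = {a \<in> carrier C. \<forall>b\<in>carrier G. brace_lambda G C a b = b}"

definition brace_Fix :: "'a monoid \<Rightarrow> 'a monoid \<Rightarrow> 'a set" where
  "brace_Fix G C = {a \<in> carrier G. \<forall>x\<in>carrier G. brace_lambda G C x a = a}"

definition lambda_orbit :: "'a monoid \<Rightarrow> 'a monoid \<Rightarrow> 'a \<Rightarrow> 'a set" where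
  "lambda_orbit G C a = (\<lambda>x. brace_lambda G C x a) ` carrier G"

definition Lambda_vertices :: "'a monoid \<Rightarrow> 'a monoid \<Rightarrow> 'a set set" where
  "Lambda_vertices G C = {lambda_orbit G C a | a. a \<in> carrier G \<and> card (lambda_orbit G C a) > 1}"

definition Lambda_adj :: "'a monoid \<Rightarrow> 'a monoid \<Rightarrow> 'a set \<Rightarrow> 'a set \<Rightarrow> bool" where
  "Lambda_adj G C L1 L2 \<longleftrightarrow> L1 \<in> Lambda_vertices G C \<and> L2 \<in> Lambda_vertices G C \<and>
     L1 \<noteq> L2 \<and> gcd (card L1) (card L2) \<noteq> 1"

end

theory Submission
  imports Defs
begin

locale sbrace = group G + C: group C for G :: "'a monoid" (structure) and C :: "'a monoid" +
  assumes carC: "carrier C = carrier G"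
  and brace: "\<And>a b c. a \<in> carrier G \<Longrightarrow> b \<in> carrier G \<Longrightarrow> c \<in> carrier G \<Longrightarrow>
      a \<otimes>\<^bsub>C\<^esub> (b \<otimes> c) = ((a \<otimes>\<^bsub>C\<^esub> b) \<otimes> inv a) \<otimes> (a \<otimes>\<^bsub>C\<^esub> c)"
begin

abbreviation "lam \<equiv> brace_lambda G C"

lemma cmc[simp]: "a \<in> carrier G \<Longrightarrow> b \<in> carrier G \<Longrightarrow> a \<otimes>\<^bsub>C\<^esub> b \<in> carrier G"
  using C.m_closed carC by auto

lemma lam_closed[simp]: "a \<in> carrier G \<Longrightarrow> b \<in> carrier G \<Longrightarrow> lam a b \<in> carrier G"
  by (simp add: brace_lambda_def)

lemma one_C: "\<one>\<^bsub>C\<^esub> = \<one>"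
proof -
  have o: "\<one>\<^bsub>C\<^esub> \<in> carrier G" using carC by auto
  have "\<one>\<^bsub>C\<^esub> \<otimes>\<^bsub>C\<^esub> (\<one> \<otimes> \<one>) = ((\<one>\<^bsub>C\<^esub> \<otimes>\<^bsub>C\<^esub> \<one>) \<otimes> inv \<one>\<^bsub>C\<^esub>) \<otimes> (\<one>\<^bsub>C\<^esub> \<otimes>\<^bsub>C\<^esub> \<one>)"
    using brace[OF o one_closed one_closed] by simp
  hence "\<one> = (\<one> \<otimes> inv \<one>\<^bsub>C\<^esub>) \<otimes> \<one>" using carC by simp
  hence "\<one> = inv \<one>\<^bsub>C\<^esub>" using o carC by simp
  thus ?thesis using o by (metis inv_inv one_closed inv_one)
qed

lemma one_C_carr[simp]: "\<one>\<^bsub>C\<^esub> \<in> carrier G" using one_C by simp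

lemma lam_add: "a \<in> carrier G \<Longrightarrow> b \<in> carrier G \<Longrightarrow> c \<in> carrier G \<Longrightarrow>
   lam a (b \<otimes> c) = lam a b \<otimes> lam a c"
  unfolding brace_lambda_def using brace by (simp add: m_assoc)

lemma lam_one[simp]: "a \<in> carrier G \<Longrightarrow> lam a \<one> = \<one>"
  unfolding brace_lambda_def using carC C.r_one one_C by (metis l_inv)

lemma lam_inv: "a \<in> carrier G \<Longrightarrow> b \<in> carrier G \<Longrightarrow> lam a (inv b) = inv (lam a b)"
proof -
  assume a: "a \<in> carrier G" and b: "b \<in> carrier G"
  have "lam a b \<otimes> lam a (inv b) = \<one>" using lam_add[OF a b, of "inv b"] a b
    by (metis inv_closed lam_one r_inv)
  thus ?thesis using a b by (metis inv_closed inv_equality inv_inv lam_closed)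
qed

lemma lam_comp: "a \<in> carrier G \<Longrightarrow> b \<in> carrier G \<Longrightarrow> c \<in> carrier G \<Longrightarrow>
   lam (a \<otimes>\<^bsub>C\<^esub> b) c = lam a (lam b c)"
proof -
  assume a: "a \<in> carrier G" and b: "b \<in> carrier G" and c: "c \<in> carrier G"
  have "lam a (lam b c) = lam a (inv b \<otimes> (b \<otimes>\<^bsub>C\<^esub> c))" by (simp add: brace_lambda_def)
  also have "\<dots> = inv (lam a b) \<otimes> lam a (b \<otimes>\<^bsub>C\<^esub> c)" using a b c by (simp add: lam_add lam_inv)
  also have "\<dots> = inv (inv a \<otimes> (a \<otimes>\<^bsub>C\<^esub> b)) \<otimes> (inv a \<otimes> (a \<otimes>\<^bsub>C\<^esub> (b \<otimes>\<^bsub>C\<^esub> c)))"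
    by (simp add: brace_lambda_def)
  also have "\<dots> = inv (a \<otimes>\<^bsub>C\<^esub> b) \<otimes> ((a \<otimes>\<^bsub>C\<^esub> b) \<otimes>\<^bsub>C\<^esub> c)"
    using a b c carC by (simp add: inv_mult_group m_assoc C.m_assoc del: r_inv l_inv)
       (metis cmc inv_closed l_one m_assoc r_inv)
  finally show ?thesis by (simp add: brace_lambda_def)
qed

lemma lam_id[simp]: "b \<in> carrier G \<Longrightarrow> lam \<one>\<^bsub>C\<^esub> b = b"
  unfolding brace_lambda_def using carC one_C by (metis C.l_one l_one inv_one)

lemma lam_cancel: "a \<in> carrier G \<Longrightarrow> b \<in> carrier G \<Longrightarrow> lam (inv\<^bsub>C\<^esub> a) (lam a b) = b"
proof -
  assume a: "a \<in> carrier G" and b: "b \<in> carrier G"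
  have i: "inv\<^bsub>C\<^esub> a \<in> carrier G" using a carC C.inv_closed by metis
  have "lam (inv\<^bsub>C\<^esub> a) (lam a b) = lam (inv\<^bsub>C\<^esub> a \<otimes>\<^bsub>C\<^esub> a) b" using lam_comp[OF i a b] by simp
  also have "inv\<^bsub>C\<^esub> a \<otimes>\<^bsub>C\<^esub> a = \<one>\<^bsub>C\<^esub>" using a carC by simp
  finally show ?thesis using b by simp
qed

lemma lam_cancel2: "a \<in> carrier G \<Longrightarrow> b \<in> carrier G \<Longrightarrow> lam a (lam (inv\<^bsub>C\<^esub> a) b) = b"
proof -
  assume a: "a \<in> carrier G" and b: "b \<in> carrier G"
  have i: "inv\<^bsub>C\<^esub> a \<in> carrier G" using a carC C.inv_closed by metis
  have "lam a (lam (inv\<^bsub>C\<^esub> a) b) = lam (a \<otimes>\<^bsub>C\<^esub> inv\<^bsub>C\<^esub> a) b" using lam_comp[OF a i b] by simp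
  also have "a \<otimes>\<^bsub>C\<^esub> inv\<^bsub>C\<^esub> a = \<one>\<^bsub>C\<^esub>" using a carC by simp
  finally show ?thesis using b by simp
qed

abbreviation "FF \<equiv> brace_Fix G C"

lemma fix_lam: "a \<in> FF \<Longrightarrow> x \<in> carrier G \<Longrightarrow> lam x a = a"
  unfolding brace_Fix_def by auto

lemma fix_carr: "a \<in> FF \<Longrightarrow> a \<in> carrier G"
  unfolding brace_Fix_def by auto

lemma fix_sub: "subgroup FF G"
proof
  show "FF \<subseteq> carrier G" using fix_carr by auto
  show "\<one> \<in> FF" unfolding brace_Fix_def by auto
  fix a b assume a: "a \<in> FF" and b: "b \<in> FF"
  have ac: "a \<in> carrier G" and bc: "b \<in> carrier G" using a b fix_carr by blast+
  show "a \<otimes> b \<in> FF" unfolding brace_Fix_def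
  proof (intro CollectI conjI ballI)
    fix x assume x: "x \<in> carrier G"
    show "lam x (a \<otimes> b) = a \<otimes> b" using lam_add[OF x ac bc] fix_lam[OF a x] fix_lam[OF b x] by simp
  qed (use ac bc in simp)
  show "inv a \<in> FF" unfolding brace_Fix_def
  proof (intro CollectI conjI ballI)
    fix x assume x: "x \<in> carrier G"
    show "lam x (inv a) = inv a" using lam_inv[OF x ac] fix_lam[OF a x] by simp
  qed (use ac in simp)
qed

lemma notfix: "a \<in> carrier G \<Longrightarrow> a \<notin> FF \<Longrightarrow> x \<in> carrier G \<Longrightarrow> lam x a \<notin> FF"
proof
  assume a: "a \<in> carrier G" "a \<notin> FF" and x: "x \<in> carrier G" and l: "lam x a \<in> FF"
  have i: "inv\<^bsub>C\<^esub> x \<in> carrier G" using x carC C.inv_closed by metis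
  have "lam (inv\<^bsub>C\<^esub> x) (lam x a) = lam x a" using fix_lam[OF l i] .
  hence "a = lam x a" using lam_cancel[OF x a(1)] by simp
  thus False using a l by simp
qed

lemma orbit_mem: "a \<in> carrier G \<Longrightarrow> a \<in> lambda_orbit G C a"
  unfolding lambda_orbit_def using lam_id[of a] one_C_carr by (metis image_eqI)

lemma orbit_fix: "a \<in> FF \<Longrightarrow> lambda_orbit G C a = {a}"
  unfolding lambda_orbit_def using fix_lam one_C_carr by auto

lemma orbit_nonfix:
  assumes fin: "finite (carrier G)" and a: "a \<in> carrier G" "a \<notin> FF"
  shows "card (lambda_orbit G C a) > 1"
proof -
  obtain x where x: "x \<in> carrier G" "lam x a \<noteq> a" using a unfolding brace_Fix_def by auto
  have "{a, lam x a} \<subseteq> lambda_orbit G C a" using orbit_mem[OF a(1)] x unfolding lambda_orbit_def by auto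
  moreover have "finite (lambda_orbit G C a)" using fin unfolding lambda_orbit_def by simp
  ultimately have "card {a, lam x a} \<le> card (lambda_orbit G C a)" by (rule card_mono[rotated])
  thus ?thesis using x by simp
qed

definition phi where "phi x = (\<lambda>b\<in>carrier G. lam x b)"

lemma phi_bij: "x \<in> carrier G \<Longrightarrow> phi x \<in> Bij (carrier G)"
proof -
  assume x: "x \<in> carrier G"
  have i: "inv\<^bsub>C\<^esub> x \<in> carrier G" using x carC C.inv_closed by metis
  have "bij_betw (lam x) (carrier G) (carrier G)"
  proof (rule bij_betwI[where g = "lam (inv\<^bsub>C\<^esub> x)"])
    show "lam x \<in> carrier G \<rightarrow> carrier G" using x by auto
    show "lam (inv\<^bsub>C\<^esub> x) \<in> carrier G \<rightarrow> carrier G" using i by auto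
  qed (use x lam_cancel lam_cancel2 in auto)
  hence "bij_betw (phi x) (carrier G) (carrier G)" unfolding phi_def
    by (rule bij_betw_cong[THEN iffD1, rotated]) auto
  thus ?thesis unfolding Bij_def phi_def by auto
qed

lemma phi_action: "group_action C (carrier G) phi"
  unfolding group_action_def group_hom_def group_hom_axioms_def
proof (intro conjI)
  show "group C" by (rule C.group_axioms)
  show "group (BijGroup (carrier G))" by (rule group_BijGroup)
  show "phi \<in> hom C (BijGroup (carrier G))"
  proof (rule homI)
    fix x assume "x \<in> carrier C"
    thus "phi x \<in> carrier (BijGroup (carrier G))" using phi_bij carC by (simp add: BijGroup_def)
  next
    fix x y assume "x \<in> carrier C" "y \<in> carrier C"
    hence x: "x \<in> carrier G" and y: "y \<in> carrier G" using carC by auto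
    have "phi (x \<otimes>\<^bsub>C\<^esub> y) = compose (carrier G) (phi x) (phi y)"
      unfolding phi_def compose_def using x y by (auto simp: lam_comp)
    thus "phi (x \<otimes>\<^bsub>C\<^esub> y) = phi x \<otimes>\<^bsub>BijGroup (carrier G)\<^esub> phi y"
      using phi_bij[OF x] phi_bij[OF y] by (simp add: BijGroup_def)
  qed
qed

lemma orbit_dvd: "a \<in> carrier G \<Longrightarrow> card (lambda_orbit G C a) dvd card (carrier G)"
proof -
  assume a: "a \<in> carrier G"
  have "orbit C phi a = lambda_orbit G C a"
    unfolding orbit_def lambda_orbit_def phi_def using a carC by auto
  moreover have "card (orbit C phi a) * card (stabilizer C phi a) = order C"
    using group_action.orbit_stabilizer_theorem[OF phi_action a] .
  ultimately show ?thesis unfolding order_def using carC by (metis dvd_triv_left)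
qed

end

locale sbrace1 = sbrace +
  assumes fin: "finite (carrier G)"
  and one_vert: "card (Lambda_vertices G C) = 1"
begin

definition "LL = (THE L. Lambda_vertices G C = {L})"

lemma V: "Lambda_vertices G C = {LL}"
proof -
  obtain L where L: "Lambda_vertices G C = {L}" using one_vert by (rule card_1_singletonE)
  have "LL = L" unfolding LL_def L by simp
  thus ?thesis using L by simp
qed

lemma LL_in: "LL \<in> Lambda_vertices G C" using V by simp

lemma LL_ex: "\<exists>l0. l0 \<in> carrier G \<and> LL = lambda_orbit G C l0 \<and> card (lambda_orbit G C l0) > 1"
  using LL_in unfolding Lambda_vertices_def by blast

lemma orbit_L: "a \<in> carrier G \<Longrightarrow> a \<notin> FF \<Longrightarrow> lambda_orbit G C a = LL"
proof -
  assume a: "a \<in> carrier G" "a \<notin> FF"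
  have "lambda_orbit G C a \<in> Lambda_vertices G C"
    unfolding Lambda_vertices_def using a(1) orbit_nonfix[OF fin a] by blast
  thus ?thesis using V by simp
qed

lemma LF: "LL = carrier G - FF"
proof
  show "carrier G - FF \<subseteq> LL"
  proof
    fix x assume "x \<in> carrier G - FF"
    hence x: "x \<in> carrier G" "x \<notin> FF" by simp_all
    have "x \<in> lambda_orbit G C x" by (rule orbit_mem[OF x(1)])
    thus "x \<in> LL" using orbit_L[OF x] by simp
  qed
  obtain l0 where l0: "l0 \<in> carrier G" "LL = lambda_orbit G C l0" "card (lambda_orbit G C l0) > 1"
    using LL_ex by blast
  have "l0 \<notin> FF"
  proof
    assume "l0 \<in> FF" then have "lambda_orbit G C l0 = {l0}" by (rule orbit_fix)
    thus False using l0(3) by simp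
  qed
  show "LL \<subseteq> carrier G - FF"
  proof
    fix y assume "y \<in> LL"
    then obtain x where x: "x \<in> carrier G" "y = lam x l0" using l0(2) unfolding lambda_orbit_def by blast
    have "y \<in> carrier G" using x l0(1) by simp
    moreover have "y \<notin> FF" using notfix[OF l0(1) \<open>l0 \<notin> FF\<close> x(1)] x(2) by simp
    ultimately show "y \<in> carrier G - FF" by simp
  qed
qed

lemma card_eq: "card LL = card FF"
proof -
  have fF: "finite FF" using fin fix_carr by (metis finite_subset subsetI)
  have FL: "card FF + card LL = card (carrier G)"
  proof -
    have sub: "FF \<subseteq> carrier G" using fix_carr by blast
    have "card LL = card (carrier G) - card FF" using LF card_Diff_subset[OF fF sub] by simp
    moreover have "card FF \<le> card (carrier G)" using card_mono[OF fin sub] .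
    ultimately show ?thesis by simp
  qed
  have d1: "card LL dvd card (carrier G)"
  proof -
    obtain a where "a \<in> LL" using LL_ex orbit_mem by blast
    hence "a \<in> carrier G" "a \<notin> FF" using LF by auto
    thus ?thesis using orbit_dvd orbit_L by metis
  qed
  have d2: "card FF dvd card (carrier G)"
  proof -
    have "card (rcosets FF) * card FF = card (carrier G)" using lagrange[OF fix_sub] unfolding order_def .
    thus ?thesis using dvd_triv_right[of "card FF" "card (rcosets FF)"] by simp
  qed
  have "card LL dvd card FF + card LL" using d1 FL by simp
  hence a1: "card LL dvd card FF" by (simp add: dvd_add_left_iff)
  have "card FF dvd card FF + card LL" using d2 FL by simp
  hence a2: "card FF dvd card LL" by (simp add: dvd_add_right_iff)
  show ?thesis using a1 a2 by (rule dvd_antisym)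
qed

lemma coset: "l \<in> LL \<Longrightarrow> y \<in> LL \<Longrightarrow> inv l \<otimes> y \<in> FF"
proof -
  assume l: "l \<in> LL" and y: "y \<in> LL"
  have lc: "l \<in> carrier G" "l \<notin> FF" using l LF by auto
  have S: "(\<lambda>g. l \<otimes> g) ` FF \<subseteq> LL"
  proof
    fix z assume "z \<in> (\<lambda>g. l \<otimes> g) ` FF"
    then obtain g where g: "g \<in> FF" "z = l \<otimes> g" by auto
    have gc: "g \<in> carrier G" using g fix_carr by auto
    have "z \<notin> FF"
    proof
      assume "z \<in> FF"
      hence "z \<otimes> inv g \<in> FF" using g subgroup.m_closed[OF fix_sub] subgroup.m_inv_closed[OF fix_sub] by auto
      moreover have "z \<otimes> inv g = l" using g gc lc by (simp add: m_assoc)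
      ultimately show False using lc by simp
    qed
    thus "z \<in> LL" using LF g gc lc by auto
  qed
  have "card ((\<lambda>g. l \<otimes> g) ` FF) = card FF"
    by (rule card_image) (use lc fix_carr in \<open>auto simp: inj_on_def\<close>)
  hence "(\<lambda>g. l \<otimes> g) ` FF = LL"
  proof -
    assume c: "card ((\<lambda>g. l \<otimes> g) ` FF) = card FF"
    have fL: "finite LL" using fin LF by simp
    show ?thesis by (rule card_subset_eq[OF fL S]) (use c card_eq in simp)
  qed
  then obtain g where g: "g \<in> FF" "y = l \<otimes> g" using y by auto
  thus ?thesis using lc fix_carr by (simp add: m_assoc[symmetric])
qed

lemma sq: "l \<in> LL \<Longrightarrow> l \<otimes> l \<in> FF"
proof (rule ccontr)
  assume l: "l \<in> LL" and n: "l \<otimes> l \<notin> FF"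
  have lc: "l \<in> carrier G" using l LF by auto
  hence "l \<otimes> l \<in> LL" using n LF by auto
  hence "inv l \<otimes> (l \<otimes> l) \<in> FF" using coset l by auto
  hence "l \<in> FF" using lc by (simp add: m_assoc[symmetric])
  thus False using l LF by auto
qed

lemma conj: "f \<in> FF \<Longrightarrow> x \<in> LL \<Longrightarrow> (x \<otimes> f) \<otimes> inv x = inv f"
proof -
  assume f: "f \<in> FF" and x: "x \<in> LL"
  have xc: "x \<in> carrier G" "x \<notin> FF" using x LF by simp_all
  have fc: "f \<in> carrier G" using f fix_carr by blast
  have xfc: "x \<otimes> f \<in> carrier G" using xc fc by simp
  have "x \<otimes> f \<notin> FF"
  proof
    assume a: "x \<otimes> f \<in> FF"
    have "inv f \<in> FF" using f subgroup.m_inv_closed[OF fix_sub] by blast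
    hence "(x \<otimes> f) \<otimes> inv f \<in> FF" using a subgroup.m_closed[OF fix_sub] by blast
    moreover have "(x \<otimes> f) \<otimes> inv f = x" using xc fc by (simp add: m_assoc)
    ultimately show False using xc by simp
  qed
  hence "x \<otimes> f \<in> LL" using xfc LF by simp
  hence "x \<otimes> f \<in> lambda_orbit G C x" using orbit_L[OF xc] by simp
  then obtain y where y: "y \<in> carrier G" "lam y x = x \<otimes> f" unfolding lambda_orbit_def
    by (metis (no_types, lifting) imageE)
  have "x \<otimes> x = lam y (x \<otimes> x)" using fix_lam[OF sq[OF x] y(1)] by simp
  also have "\<dots> = lam y x \<otimes> lam y x" using lam_add[OF y(1) xc(1) xc(1)] .
  also have "\<dots> = (x \<otimes> f) \<otimes> (x \<otimes> f)" using y(2) by simp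
  also have "\<dots> = x \<otimes> (f \<otimes> (x \<otimes> f))" using xc fc by (simp add: m_assoc)
  finally have "x \<otimes> x = x \<otimes> (f \<otimes> (x \<otimes> f))" .
  hence e: "x = f \<otimes> (x \<otimes> f)" using xc fc by simp
  have "f \<otimes> ((x \<otimes> f) \<otimes> inv x) = (f \<otimes> (x \<otimes> f)) \<otimes> inv x" using xc fc by (simp add: m_assoc)
  also have "\<dots> = x \<otimes> inv x" using e by simp
  also have "\<dots> = \<one>" using xc by simp
  finally have h: "f \<otimes> ((x \<otimes> f) \<otimes> inv x) = \<one>" .
  have "inv ((x \<otimes> f) \<otimes> inv x) = f" by (rule inv_equality[OF h]) (use xc fc in simp_all)
  hence "inv (inv ((x \<otimes> f) \<otimes> inv x)) = inv f" by simp
  thus ?thesis using xc fc by simp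
qed

lemma L_ne: "\<exists>l. l \<in> LL"
  using LL_ex orbit_mem by blast

definition "l1 = (SOME l. l \<in> LL)"

lemma l1: "l1 \<in> LL" unfolding l1_def using L_ne by (rule someI_ex)

lemma l1c: "l1 \<in> carrier G" "l1 \<notin> FF" using l1 LF by simp_all

lemma inv_hom_F: "u \<in> FF \<Longrightarrow> v \<in> FF \<Longrightarrow> inv (u \<otimes> v) = inv u \<otimes> inv v"
proof -
  assume u: "u \<in> FF" and v: "v \<in> FF"
  have l: "l1 \<in> LL" by (rule l1)
  have lc: "l1 \<in> carrier G" using l1c by simp
  have uc: "u \<in> carrier G" and vc: "v \<in> carrier G" using u v fix_carr by blast+
  have uv: "u \<otimes> v \<in> FF" using u v subgroup.m_closed[OF fix_sub] by blast
  have "inv (u \<otimes> v) = (l1 \<otimes> (u \<otimes> v)) \<otimes> inv l1" using conj[OF uv l] by simp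
  also have "\<dots> = ((l1 \<otimes> u) \<otimes> inv l1) \<otimes> ((l1 \<otimes> v) \<otimes> inv l1)"
  proof -
    have c: "\<And>z. z \<in> carrier G \<Longrightarrow> inv l1 \<otimes> (l1 \<otimes> z) = z" using lc by (simp add: m_assoc[symmetric])
    show ?thesis using lc uc vc by (simp add: m_assoc c)
  qed
  also have "\<dots> = inv u \<otimes> inv v" using conj[OF u l] conj[OF v l] by simp
  finally show ?thesis .
qed

lemma F_comm: "a \<in> FF \<Longrightarrow> b \<in> FF \<Longrightarrow> a \<otimes> b = b \<otimes> a"
proof -
  assume a: "a \<in> FF" and b: "b \<in> FF"
  have ac: "a \<in> carrier G" and bc: "b \<in> carrier G" using a b fix_carr by blast+
  have ia: "inv a \<in> FF" and ib: "inv b \<in> FF" using a b subgroup.m_inv_closed[OF fix_sub] by blast+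
  have "inv (inv a \<otimes> inv b) = inv (inv a) \<otimes> inv (inv b)" by (rule inv_hom_F[OF ia ib])
  hence "inv (inv a \<otimes> inv b) = a \<otimes> b" using ac bc by simp
  moreover have "inv (inv a \<otimes> inv b) = b \<otimes> a"
    using ac bc by (simp add: inv_mult_group)
  ultimately show ?thesis by simp
qed

lemma F_group_comm: "comm_group (G\<lparr>carrier := FF\<rparr>)"
proof -
  have g: "group (G\<lparr>carrier := FF\<rparr>)" by (rule subgroup.subgroup_is_group[OF fix_sub is_group])
  show ?thesis by (rule group.group_comm_groupI[OF g]) (simp add: F_comm)
qed

definition "hh x = inv l1 \<otimes> lam x l1"

lemma hh_F: "x \<in> carrier G \<Longrightarrow> hh x \<in> FF"
proof -
  assume x: "x \<in> carrier G"
  have "lam x l1 \<in> lambda_orbit G C l1" unfolding lambda_orbit_def using x by blast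
  hence "lam x l1 \<in> LL" using orbit_L[OF l1c] by simp
  thus ?thesis unfolding hh_def using coset[OF l1] by blast
qed

lemma hh_eq: "x \<in> carrier G \<Longrightarrow> lam x l1 = l1 \<otimes> hh x"
  unfolding hh_def using l1c by (simp add: m_assoc[symmetric])

lemma hh_mult: "x \<in> carrier G \<Longrightarrow> y \<in> carrier G \<Longrightarrow> hh (x \<otimes>\<^bsub>C\<^esub> y) = hh x \<otimes> hh y"
proof -
  assume x: "x \<in> carrier G" and y: "y \<in> carrier G"
  have hy: "hh y \<in> carrier G" using hh_F[OF y] fix_carr by blast
  have "lam (x \<otimes>\<^bsub>C\<^esub> y) l1 = lam x (lam y l1)" using lam_comp x y l1c by simp
  also have "\<dots> = lam x (l1 \<otimes> hh y)" using hh_eq[OF y] by simp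
  also have "\<dots> = lam x l1 \<otimes> lam x (hh y)" using lam_add[OF x l1c(1) hy] .
  also have "\<dots> = lam x l1 \<otimes> hh y" using fix_lam[OF hh_F[OF y] x] by simp
  finally have "lam (x \<otimes>\<^bsub>C\<^esub> y) l1 = lam x l1 \<otimes> hh y" .
  thus ?thesis unfolding hh_def[of "x \<otimes>\<^bsub>C\<^esub> y"] using x l1c hy
    by (simp add: m_assoc hh_def)
qed

lemma hh_hom: "group_hom C (G\<lparr>carrier := FF\<rparr>) hh"
  unfolding group_hom_def group_hom_axioms_def
proof (intro conjI)
  show "group C" by (rule C.group_axioms)
  show "group (G\<lparr>carrier := FF\<rparr>)" by (rule subgroup.subgroup_is_group[OF fix_sub is_group])
  show "hh \<in> hom C (G\<lparr>carrier := FF\<rparr>)"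
    by (rule homI) (use carC hh_F hh_mult in simp_all)
qed

lemma hh_surj: "hh ` carrier C = carrier (G\<lparr>carrier := FF\<rparr>)"
proof
  show "hh ` carrier C \<subseteq> carrier (G\<lparr>carrier := FF\<rparr>)" using hh_F carC by auto
  show "carrier (G\<lparr>carrier := FF\<rparr>) \<subseteq> hh ` carrier C"
  proof
    fix g assume "g \<in> carrier (G\<lparr>carrier := FF\<rparr>)"
    hence g: "g \<in> FF" by simp
    have gc: "g \<in> carrier G" using g fix_carr by blast
    have "l1 \<otimes> g \<notin> FF"
    proof
      assume a: "l1 \<otimes> g \<in> FF"
      have "inv g \<in> FF" using g subgroup.m_inv_closed[OF fix_sub] by blast
      hence "(l1 \<otimes> g) \<otimes> inv g \<in> FF" using a subgroup.m_closed[OF fix_sub] by blast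
      moreover have "(l1 \<otimes> g) \<otimes> inv g = l1" using l1c gc by (simp add: m_assoc)
      ultimately show False using l1c by simp
    qed
    hence "l1 \<otimes> g \<in> LL" using l1c gc LF by simp
    hence "l1 \<otimes> g \<in> lambda_orbit G C l1" using orbit_L[OF l1c] by simp
    then obtain x where x: "x \<in> carrier G" "lam x l1 = l1 \<otimes> g" unfolding lambda_orbit_def
      by (metis (no_types, lifting) imageE)
    have "hh x = g" unfolding hh_def using x l1c gc by (simp add: m_assoc[symmetric])
    thus "g \<in> hh ` carrier C" using x carC by (metis imageI)
  qed
qed

lemma hh_ker: "kernel C (G\<lparr>carrier := FF\<rparr>) hh = brace_ker G C"
proof
  show "brace_ker G C \<subseteq> kernel C (G\<lparr>carrier := FF\<rparr>) hh"
  proof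
    fix x assume "x \<in> brace_ker G C"
    hence x: "x \<in> carrier C" "lam x l1 = l1" unfolding brace_ker_def using l1c by auto
    thus "x \<in> kernel C (G\<lparr>carrier := FF\<rparr>) hh" unfolding kernel_def hh_def using l1c by simp
  qed
  show "kernel C (G\<lparr>carrier := FF\<rparr>) hh \<subseteq> brace_ker G C"
  proof
    fix x assume "x \<in> kernel C (G\<lparr>carrier := FF\<rparr>) hh"
    hence xC: "x \<in> carrier C" and h1: "hh x = \<one>" unfolding kernel_def by simp_all
    have x: "x \<in> carrier G" using xC carC by simp
    have xl: "lam x l1 = l1" using hh_eq[OF x] h1 l1c by simp
    have "\<forall>b\<in>carrier G. lam x b = b"
    proof
      fix b assume b: "b \<in> carrier G"
      show "lam x b = b"
      proof (cases "b \<in> FF")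
        case True thus ?thesis using fix_lam x by simp
      next
        case False
        hence "b \<in> LL" using b LF by simp
        hence g: "inv l1 \<otimes> b \<in> FF" using coset[OF l1] by blast
        have gc: "inv l1 \<otimes> b \<in> carrier G" using b l1c by simp
        have bb: "b = l1 \<otimes> (inv l1 \<otimes> b)" using b l1c by (simp add: m_assoc[symmetric])
        have "lam x b = lam x (l1 \<otimes> (inv l1 \<otimes> b))" using bb by simp
        also have "\<dots> = lam x l1 \<otimes> lam x (inv l1 \<otimes> b)" using lam_add[OF x l1c(1) gc] .
        also have "\<dots> = l1 \<otimes> (inv l1 \<otimes> b)" using xl fix_lam[OF g x] by simp
        finally show ?thesis using bb by simp
      qed
    qed
    thus "x \<in> brace_ker G C" unfolding brace_ker_def using xC by simp
  qed
qed

lemma main_iso: "(C Mod brace_ker G C) \<cong> (G\<lparr>carrier := FF\<rparr>)"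
  using group_hom.FactGroup_iso[OF hh_hom hh_surj] hh_ker by simp

lemma main_comm: "comm_group (C Mod brace_ker G C)"
proof -
  have n: "brace_ker G C \<lhd> C" using group_hom.normal_kernel[OF hh_hom] hh_ker by simp
  have g: "group (C Mod brace_ker G C)" by (rule normal.factorgroup_is_group[OF n])
  have "(G\<lparr>carrier := FF\<rparr>) \<cong> (C Mod brace_ker G C)"
    by (rule group.iso_sym[OF g main_iso])
  thus ?thesis using comm_group.iso_imp_comm_group[OF F_group_comm] g group.is_monoid by blast
qed

end

theorem mainTheorem13:
  fixes G C :: "'a monoid"
  assumes "skew_brace G C"
    and "finite (carrier G)"
    and "card (Lambda_vertices G C) = 1"
  shows "comm_group (C Mod brace_ker G C)
       \<and> comm_group (G\<lparr>carrier := brace_Fix G C\<rparr>)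
       \<and> (C Mod brace_ker G C) \<cong> (G\<lparr>carrier := brace_Fix G C\<rparr>)
       \<and> (\<forall>f\<in>brace_Fix G C. \<forall>x\<in>carrier G - brace_Fix G C.
            (x \<otimes>\<^bsub>G\<^esub> f) \<otimes>\<^bsub>G\<^esub> inv\<^bsub>G\<^esub> x = inv\<^bsub>G\<^esub> f)"
proof -
  interpret sbrace1 G C
  proof -
    have s: "sbrace G C" using assms(1) unfolding skew_brace_def sbrace_def sbrace_axioms_def by auto
    show "sbrace1 G C" unfolding sbrace1_def sbrace1_axioms_def using s assms(2,3) by simp
  qed
  have c: "\<forall>f\<in>brace_Fix G C. \<forall>x\<in>carrier G - brace_Fix G C.
            (x \<otimes>\<^bsub>G\<^esub> f) \<otimes>\<^bsub>G\<^esub> inv\<^bsub>G\<^esub> x = inv\<^bsub>G\<^esub> f"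
    using conj LF by simp
  show ?thesis using main_comm F_group_comm main_iso c by simp
qed

end
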